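(* For every integer $n>1$, let $A=1_{n\times n}$ (the all-ones $n\times n$ matrix) and $B=1_{n\times 1}$. Then $(A,B)$ is uncontrollable (indeed its controllability matrix has rank $1$) and its zero-norm distance to controllability equals $r_c(A,B)=n-1$.
   Context: $r_c(A,B)=\min\{\|[\Delta A,\Delta B]\|_0: \Delta A\in\mathbb{R}^{n\times n},\Delta B\in\mathbb{R}^{n\times m},(A+\Delta A,B+\Delta B)\text{ controllable}\}$, where $\|M\|_0$ is the number of nonzero entries of $M$, and controllability means $\operatorname{rank}[B,AB,\dots,A^{n-1}B]=n$. *)

theory Defs
  imports "HOL-Analysis.Analysis"
begin

(* Matrix power w.r.t. matrix multiplication (note: (^) on real^'n^'n is componentwise). *)
fun matpow :: "real^'n^'n \<Rightarrow> nat \<Rightarrow> real^'n^'n" where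
  "matpow A 0 = mat 1"
| "matpow A (Suc k) = A ** matpow A k"

definition ctrb_columns :: "real^'n^'n \<Rightarrow> real^'m^'n \<Rightarrow> (real^'n) set" where
  "ctrb_columns A B = (\<Union>k<CARD('n). columns (matpow A k ** B))"

definition ctrb_rank :: "real^'n^'n \<Rightarrow> real^'m^'n \<Rightarrow> nat" where
  "ctrb_rank A B = dim (span (ctrb_columns A B))"

definition controllable :: "real^'n^'n \<Rightarrow> real^'m^'n \<Rightarrow> bool" where
  "controllable A B \<longleftrightarrow> ctrb_rank A B = CARD('n)"

definition nnz :: "real^'c^'r \<Rightarrow> nat" where
  "nnz M = card {(i, j). M $ i $ j \<noteq> 0}"

(* ||[dA, dB]||_0 = nnz dA + nnz dB *)
definition dist_ctrb :: "real^'n^'n \<Rightarrow> real^'m^'n \<Rightarrow> nat" where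
  "dist_ctrb A B = (LEAST k. \<exists>dA dB. nnz dA + nnz dB = k \<and> controllable (A + dA) (B + dB))"

end

theory Submission
  imports Defs "HOL-Computational_Algebra.Polynomial"
begin

lemma row_eq_mult:
  fixes A :: "real^'n^'r" and M :: "real^'m^'n"
  assumes "A$i = A$j" shows "(A ** M)$i = (A ** M)$j"
  using assms by (simp add: matrix_matrix_mult_def vec_eq_iff)

lemma row_eq_pow:
  fixes A :: "real^'n^'n" and B :: "real^'m^'n"
  assumes "A$i = A$j" "B$i = B$j"
  shows "(matpow A k ** B)$i = (matpow A k ** B)$j"
proof (cases k)
  case 0 then show ?thesis using assms by (simp add: matrix_mul_lid)
next
  case (Suc k') 
  have "matpow A k ** B = A ** (matpow A k' ** B)" using Suc by (simp add: matrix_mul_assoc)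
  then show ?thesis using row_eq_mult[OF assms(1)] by simp
qed

lemma uncontr_rows:
  fixes A :: "real^'n^'n" and B :: "real^'m^'n"
  assumes "i \<noteq> j" "A$i = A$j" "B$i = B$j"
  shows "ctrb_rank A B < CARD('n)"
proof -
  define w :: "real^'n" where "w = axis i 1 - axis j 1"
  have w0: "w \<noteq> 0" using assms(1) unfolding w_def
    by (metis axis_eq_axis eq_iff_diff_eq_0 zero_neq_one)
  have sub: "ctrb_columns A B \<subseteq> {x. w \<bullet> x = 0}"
  proof
    fix c assume "c \<in> ctrb_columns A B"
    then obtain k l where c: "c = column l (matpow A k ** B)"
      unfolding ctrb_columns_def columns_def by auto
    have "c$i = c$j" using row_eq_pow[OF assms(2,3), of k] unfolding c column_def by simp
    then show "c \<in> {x. w \<bullet> x = 0}" unfolding w_def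
      by (simp add: inner_diff_left inner_commute[of "axis _ _"] cart_eq_inner_axis[symmetric])
  qed
  have "span (ctrb_columns A B) \<subseteq> {x. w \<bullet> x = 0}"
    by (rule span_minimal[OF sub subspace_hyperplane])
  then have "dim (span (ctrb_columns A B)) \<le> dim {x. w \<bullet> x = 0}" by (rule dim_subset)
  also have "\<dots> = CARD('n) - 1" using dim_hyperplane[OF w0] by simp
  finally show ?thesis unfolding ctrb_rank_def by (metis diff_less less_le_trans zero_less_card_finite zero_less_one  le_neq_implies_less less_imp_diff_less order.strict_trans1 linorder_not_le)
qed


lemma pow_J:
  fixes A :: "real^'n^'n" and B :: "real^1^'n"
  assumes "A = (\<chi> i j. 1)" "B = (\<chi> i j. 1)"
  shows "matpow A k ** B = (\<chi> i j. real CARD('n) ^ k)"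
proof (induction k)
  case 0 then show ?case using assms by (simp add: matrix_mul_lid)
next
  case (Suc k)
  have "matpow A (Suc k) ** B = A ** (matpow A k ** B)" by (simp add: matrix_mul_assoc)
  also have "\<dots> = (\<chi> i j. real CARD('n) ^ Suc k)"
    unfolding Suc using assms by (simp add: matrix_matrix_mult_def vec_eq_iff)
  finally show ?case .
qed

lemma rank_J:
  fixes A :: "real^'n^'n" and B :: "real^1^'n"
  assumes "A = (\<chi> i j. 1)" "B = (\<chi> i j. 1)"
  shows "ctrb_rank A B = 1"
proof -
  define one :: "real^'n" where "one = (\<chi> i. 1)"
  have cols: "ctrb_columns A B = (\<lambda>k. scaleR (real CARD('n) ^ k) one) ` {..<CARD('n)}"
    unfolding ctrb_columns_def pow_J[OF assms] columns_def column_def one_def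
    by (auto simp: vec_eq_iff)
  have "one \<in> ctrb_columns A B" unfolding cols
    by (rule image_eqI[of _ _ 0]) auto
  then have 1: "span {one} \<subseteq> span (ctrb_columns A B)" by (simp add: span_mono)
  have "ctrb_columns A B \<subseteq> span {one}" unfolding cols
    by (auto intro: span_mul span_base)
  then have 2: "span (ctrb_columns A B) \<subseteq> span {one}" by (simp add: span_minimal)
  have "one \<noteq> 0" unfolding one_def by (simp add: vec_eq_iff)
  then show ?thesis unfolding ctrb_rank_def using 1 2
    by (metis dim_singleton dim_span subset_antisym)
qed

lemma lower_bound:
  fixes A :: "real^'n^'n" and B :: "real^1^'n" and dA :: "real^'n^'n" and dB :: "real^1^'n"
  assumes "A = (\<chi> i j. 1)" "B = (\<chi> i j. 1)"
    and "nnz dA + nnz dB < CARD('n) - 1"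
  shows "\<not> controllable (A + dA) (B + dB)"
proof -
  define T where "T = fst ` {(i,j). dA$i$j \<noteq> 0} \<union> fst ` {(i,j). dB$i$j \<noteq> 0}"
  have "card T \<le> card (fst ` {(i,j). dA$i$j \<noteq> 0}) + card (fst ` {(i,j). dB$i$j \<noteq> 0})"
    unfolding T_def by (rule card_Un_le)
  also have "\<dots> \<le> nnz dA + nnz dB" unfolding nnz_def
    by (intro add_mono card_image_le) auto
  finally have cT: "card T < CARD('n) - 1" using assms(3) by simp
  have "card (UNIV - T) = CARD('n) - card T" by (simp add: card_Diff_subset)
  then have "card (UNIV - T) \<ge> 2" using cT by simp
  then obtain i j where ij: "i \<in> UNIV - T" "j \<in> UNIV - T" "i \<noteq> j"
    by (metis One_nat_def card_le_Suc_iff numeral_2_eq_2 insert_iff Suc_le_D)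
  have rA: "dA $ i = 0" "dA $ j = 0" "dB $ i = 0" "dB $ j = 0" using ij unfolding T_def
    by (auto simp: vec_eq_iff image_iff)
  have "ctrb_rank (A + dA) (B + dB) < CARD('n)"
    by (rule uncontr_rows[OF ij(3)]) (use rA assms in \<open>auto simp: vec_eq_iff\<close>)
  then show ?thesis unfolding controllable_def by simp
qed


lemma vandermonde_span:
  fixes d :: "'n::finite \<Rightarrow> real"
  assumes inj: "inj d"
  shows "span ((\<lambda>k. (\<chi> i. d i ^ k) :: real^'n) ` {..<CARD('n)}) = UNIV"
proof -
  define u :: "nat \<Rightarrow> real^'n" where "u k = (\<chi> i. d i ^ k)" for k
  define S where "S = u ` {..<CARD('n)}"
  have ax: "axis i 1 \<in> span S" for i :: 'n
  proof -
    define p :: "real poly" where "p = (\<Prod>j\<in>UNIV-{i}. [:- d j, 1:])"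
    have "degree p \<le> (\<Sum>j\<in>UNIV-{i}. degree [:- d j, 1:])"
      unfolding p_def using degree_prod_sum_le[of "UNIV-{i}" "\<lambda>j. [:- d j, 1:]"] by (simp add: o_def)
    also have "\<dots> = CARD('n) - 1" by simp
    finally have dp: "degree p < CARD('n)"
      by (metis One_nat_def Suc_pred le_imp_less_Suc zero_less_card_finite)
    define w where "w = (\<Sum>l\<le>degree p. coeff p l *\<^sub>R u l)"
    have wS: "w \<in> span S" unfolding w_def S_def
      using dp by (intro span_sum span_mul span_base) auto
    have wc: "w $ m = poly p (d m)" for m
      unfolding w_def u_def poly_altdef by (simp add: sum_component)
    have pv: "poly p x = (\<Prod>j\<in>UNIV-{i}. x - d j)" for x
      unfolding p_def by (simp add: poly_prod)
    define c where "c = poly p (d i)"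
    have c0: "c \<noteq> 0" unfolding c_def pv
      using inj by (auto simp: inj_eq)
    have "axis i 1 = (1 / c) *\<^sub>R w"
    proof (subst vec_eq_iff, intro allI)
      fix m
      show "axis i 1 $ m = ((1 / c) *\<^sub>R w) $ m"
      proof (cases "m = i")
        case True then show ?thesis using c0 by (simp add: wc c_def axis_def)
      next
        case False
        have "poly p (d m) = 0" unfolding pv using False
          by (intro prod_zero) auto
        then show ?thesis using False by (simp add: wc axis_def)
      qed
    qed
    then show ?thesis using wS by (simp add: span_mul)
  qed
  have "Basis \<subseteq> span S"
    by (auto simp: Basis_vec_def ax)
  then have "span Basis \<subseteq> span S" by (rule span_minimal[OF _ subspace_span])
  then show ?thesis unfolding S_def u_def by (simp add: span_Basis top_unique)
qed


lemma sum_diag_mult: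
  fixes y :: "'n::finite \<Rightarrow> real"
  shows "(\<Sum>j\<in>UNIV. (if i = j then a else 0) * y j) = a * y i"
proof -
  have "(\<Sum>j\<in>UNIV. (if i = j then a else 0) * y j) = (\<Sum>j\<in>UNIV. if i = j then a * y j else 0)"
    by (rule sum.cong) auto
  then show ?thesis by simp
qed

lemma contr_diag:
  fixes A :: "real^'n^'n" and B :: "real^1^'n" and d :: "'n \<Rightarrow> real"
  assumes inj: "inj d" and A: "A = (\<chi> i j. 1)" and B: "B = (\<chi> i j. 1)"
  defines "Dm \<equiv> (\<chi> i j. if i = j then d i else 0) :: real^'n^'n"
  shows "controllable (A + Dm) B"
proof -
  define A' where "A' = A + Dm"
  define one :: "real^'n" where "one = (\<chi> i. 1)"
  define u :: "nat \<Rightarrow> real^'n" where "u k = (\<chi> i. d i ^ k)" for k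
  define v where "v k = matpow A' k *v one" for k
  have cols: "columns (matpow A' k ** B) = {v k}" for k
  proof -
    have "column l (matpow A' k ** B) = v k" for l
      unfolding v_def column_def B one_def
      by (simp add: matrix_matrix_mult_def matrix_vector_mult_def vec_eq_iff)
    then show ?thesis unfolding columns_def by auto
  qed
  have ctr: "ctrb_columns A' B = v ` {..<CARD('n)}"
    unfolding ctrb_columns_def cols by auto
  have vS: "v (Suc k) = A' *v v k" for k
    unfolding v_def by (simp add: matrix_vector_mul_assoc)
  have Ax: "A' *v x = sum (\<lambda>j. x$j) UNIV *\<^sub>R one + Dm *v x" for x
  proof -
    have "(\<Sum>j\<in>UNIV. (if i = j then d i else 0) * x $ j) = d i * x $ i" for i
    proof -
      have "(\<Sum>j\<in>UNIV. (if i = j then d i else 0) * x $ j) = (\<Sum>j\<in>UNIV. if i = j then d i * x$j else 0)"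
        by (rule sum.cong) auto
      then show ?thesis by simp
    qed
    then show ?thesis
      unfolding A'_def A Dm_def one_def
      by (simp add: matrix_vector_mult_def vec_eq_iff distrib_right sum.distrib)
  qed
  have Du: "Dm *v u k = u (Suc k)" for k
    unfolding Dm_def u_def
    by (simp add: matrix_vector_mult_def vec_eq_iff sum_diag_mult)
  have lin: "linear ((*v) Dm)" by (rule matrix_vector_mul_linear)
  have P: "v k - u k \<in> span (u ` {..<k})" for k
  proof (induction k)
    case 0
    have "v 0 = u 0" unfolding v_def u_def one_def by simp
    then show ?case by (simp add: span_zero)
  next
    case (Suc k)
    have eq: "v (Suc k) - u (Suc k) = sum (\<lambda>j. v k $ j) UNIV *\<^sub>R u 0 + Dm *v (v k - u k)"
      unfolding vS Ax Du[symmetric] by (simp add: matrix_vector_mult_diff_distrib one_def u_def)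
    have "Dm *v (v k - u k) \<in> (*v) Dm ` span (u ` {..<k})" using Suc by blast
    also have "\<dots> = span ((*v) Dm ` u ` {..<k})" by (simp add: span_linear_image[OF lin])
    also have "\<dots> \<subseteq> span (u ` {..<Suc k})"
      by (rule span_mono) (auto simp: Du)
    finally have 1: "Dm *v (v k - u k) \<in> span (u ` {..<Suc k})" .
    have 2: "u 0 \<in> span (u ` {..<Suc k})" by (rule span_base) auto
    show ?case unfolding eq by (intro span_add span_mul 1 2)
  qed
  have Q: "span (u ` {..<k}) \<subseteq> span (v ` {..<k})" for k
  proof (induction k)
    case 0 then show ?case by simp
  next
    case (Suc k)
    have a: "v k \<in> span (v ` {..<Suc k})" by (rule span_base) auto
    have b: "v k - u k \<in> span (v ` {..<Suc k})"
      using P[of k] Suc span_mono[of "v ` {..<k}" "v ` {..<Suc k}"] by (meson image_mono lessThan_subset_iff le_SucI order_refl subsetD)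
    have "u k = v k - (v k - u k)" by simp
    then have uk: "u k \<in> span (v ` {..<Suc k})" using a b by (metis span_diff)
    have "u ` {..<Suc k} \<subseteq> span (v ` {..<Suc k})"
    proof
      fix x assume "x \<in> u ` {..<Suc k}"
      then obtain l where l: "l < Suc k" "x = u l" by auto
      show "x \<in> span (v ` {..<Suc k})"
      proof (cases "l = k")
        case True then show ?thesis using uk l by simp
      next
        case False
        then have "x \<in> span (u ` {..<k})" using l by (intro span_base) auto
        then show ?thesis using Suc span_mono[of "v ` {..<k}" "v ` {..<Suc k}"] by (meson image_mono lessThan_subset_iff le_SucI order_refl subsetD)
      qed
    qed
    then show ?case by (rule span_minimal[OF _ subspace_span])
  qed
  have "UNIV \<subseteq> span (v ` {..<CARD('n)})"
    using Q[of "CARD('n)"] vandermonde_span[OF inj] unfolding u_def by simp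
  then have "span (ctrb_columns A' B) = UNIV" unfolding ctr by auto
  then show ?thesis unfolding controllable_def ctrb_rank_def A'_def[symmetric]
    by (simp add: dim_UNIV)
qed


theorem mainTheorem6:
  fixes A :: "real^'n^'n" and B :: "real^1^'n"
  assumes "CARD('n) > 1"
    and "A = (\<chi> i j. 1)"
    and "B = (\<chi> i j. 1)"
  shows "\<not> controllable A B \<and> ctrb_rank A B = 1 \<and> dist_ctrb A B = CARD('n) - 1"
proof -
  have r1: "ctrb_rank A B = 1" by (rule rank_J[OF assms(2,3)])
  have nc: "\<not> controllable A B" unfolding controllable_def r1 using assms(1) by simp
  obtain f :: "'n \<Rightarrow> nat" where f: "bij_betw f UNIV {0..<CARD('n)}"
    using ex_bij_betw_finite_nat[of "UNIV :: 'n set"] by auto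
  define d where "d i = real (f i)" for i
  have injd: "inj d" using f unfolding d_def bij_betw_def inj_on_def by auto
  obtain i0 where i0: "f i0 = 0" using f assms(1) unfolding bij_betw_def
  proof -
    have "0 \<in> f ` UNIV" using f assms(1) unfolding bij_betw_def by simp
    then obtain i where "f i = 0" by auto
    then show ?thesis by (rule that)
  qed
  define Dm :: "real^'n^'n" where "Dm = (\<chi> i j. if i = j then d i else 0)"
  have "{(i, j). Dm $ i $ j \<noteq> 0} = (\<lambda>i. (i, i)) ` (UNIV - {i0})"
  proof -
    have "f i = 0 \<longleftrightarrow> i = i0" for i using f i0 unfolding bij_betw_def inj_on_def by auto
    then show ?thesis unfolding Dm_def d_def by auto
  qed
  then have nD: "nnz Dm = CARD('n) - 1" unfolding nnz_def
    by (simp add: card_image inj_on_def card_Diff_subset)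
  have n0: "nnz (0 :: real^1^'n) = 0" unfolding nnz_def by simp
  have wit: "\<exists>dA dB. nnz dA + nnz dB = CARD('n) - 1 \<and> controllable (A + dA) (B + dB)"
    using contr_diag[OF injd assms(2,3)] nD n0 unfolding Dm_def[symmetric]
    by (intro exI[of _ Dm] exI[of _ "0 :: real^1^'n"]) simp
  have "dist_ctrb A B = CARD('n) - 1" unfolding dist_ctrb_def
  proof (rule Least_equality)
    show "\<exists>dA dB. nnz dA + nnz dB = CARD('n) - 1 \<and> controllable (A + dA) (B + dB)" by (rule wit)
  next
    fix k assume "\<exists>dA dB. nnz dA + nnz dB = k \<and> controllable (A + dA) (B + dB)"
    then obtain dA dB where "nnz dA + nnz (dB :: real^1^'n) = k" "controllable (A + dA) (B + dB)" by blast
    then show "CARD('n) - 1 \<le> k" using lower_bound[OF assms(2,3), of dA dB] by linarith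
  qed
  then show ?thesis using nc r1 by simp
qed

end
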